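(* Consider a $k$-party quantum communication protocol $\mathcal{P}=(U_1^{p_1}(x_{p_1}),\dots,U_r^{p_r}(x_{p_r}))$. The final state of $\mathcal{P}$ on input $x_1\in\mathcal{X}_1,\dots,x_k\in\mathcal{X}_k$ can be written as \[\sum_{i\in S}a_i^1(x_1)\,a_i^2(x_2)\cdots a_i^k(x_k)\,\ket{A_i^1(x_1)}\ket{A_i^2(x_2)}\cdots\ket{A_i^k(x_k)}\ket{f(i)},\] where $S=\{0,1\}^{C(\mathcal{P})}$, each $a_i^p(x_p)$ is a complex number depending only on $i$ and $x_p$, each $\ket{A_i^p(x_p)}$ is a unit vector in $H_p$ depending only on $i$ and $x_p$, and $f:S\to\overline{H}$ is a function (independent of the inputs) mapping each $i$ to a state in $\overline{H}$.
   Context: $k$-party quantum communication model: players $P_1,\dots,P_k$, Hilbert space (of qubits) $H=H_1\otimes\cdots\otimes H_k\otimes\overline{H}$ with $H_i$ private to $P_i$ and $\overline{H}$ the shared channel; $P_i$ receives $x_i\in\mathcal{X}_i$. A protocol is a sequence of unitaries $(U_1^{p_1}(x_{p_1}),\dots,U_r^{p_r}(x_{p_r}))$, $U_j^{p_j}(x_{p_j})$ depending only on $x_{p_j}$ and acting only on $H_{p_j}\otimes\overline{H_j}$, where $\overline{H_j}$ is spanned by some qubits of $\overline{H}$; the sequences $p_1,\dots,p_r$ and $\overline{H_1},\dots,\overline{H_r}$ are fixed independently of the inputs. The initial state is $\ket{0}$ and the final state is $U_r^{p_r}(x_{p_r})\cdots U_1^{p_1}(x_{p_1})\ket{0}$.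 Communication complexity $C(\mathcal{P})=\sum_{j=1}^r\log(\dim\overline{H_j})$. *)

theory Defs
  imports Complex_Main
begin

text \<open>Qubits of the whole system: private qubit j of player p, or channel qubit j.
  The Hilbert space spanned by a finite set T of qubits has computational basis the
  assignments T -> bool (extended by False outside T); vectors are functions from
  such assignments to complex numbers.\<close>

datatype qubit = Priv nat nat | Chan nat

type_synonym basis = "qubit \<Rightarrow> bool"
type_synonym vec = "basis \<Rightarrow> complex"
type_synonym matrix = "basis \<Rightarrow> basis \<Rightarrow> complex"

definition asg :: "qubit set \<Rightarrow> basis set" where
  "asg T = {b. \<forall>q. q \<notin> T \<longrightarrow> \<not> b q}"

definition restr :: "basis \<Rightarrow> qubit set \<Rightarrow> basis" where
  "restr b T = (\<lambda>q. q \<in> T \<and> b q)"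

definition overr :: "basis \<Rightarrow> basis \<Rightarrow> qubit set \<Rightarrow> basis" where
  "overr b c T = (\<lambda>q. if q \<in> T then c q else b q)"

text \<open>M is a unitary on the space of qubits T (M c a = matrix entry <c|M|a>).\<close>
definition unitary_on :: "qubit set \<Rightarrow> matrix \<Rightarrow> bool" where
  "unitary_on T M \<longleftrightarrow> (\<forall>a\<in>asg T. \<forall>b\<in>asg T.
      (\<Sum>c\<in>asg T. cnj (M c a) * M c b) = (if a = b then 1 else 0))"

text \<open>Apply M (acting on qubits T) tensored with the identity on all other qubits.\<close>
definition apply_op :: "qubit set \<Rightarrow> matrix \<Rightarrow> vec \<Rightarrow> vec" where
  "apply_op T M \<psi> = (\<lambda>b. \<Sum>c\<in>asg T. M (restr b T) c * \<psi> (overr b c T))"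

definition priv_reg :: "(nat \<Rightarrow> nat) \<Rightarrow> nat \<Rightarrow> qubit set" where
  "priv_reg n p = Priv p ` {..<n p}"

definition chan_reg :: "nat set \<Rightarrow> qubit set" where
  "chan_reg Q = Chan ` Q"

definition sys_reg :: "nat \<Rightarrow> (nat \<Rightarrow> nat) \<Rightarrow> nat \<Rightarrow> qubit set" where
  "sys_reg k n m = (\<Union>p<k. priv_reg n p) \<union> chan_reg {..<m}"

text \<open>A protocol step (p, Q, U): player p applies U(x_p) on H_p tensor the channel
  qubits Q. A protocol is a list of steps (p_j, Q_j, U_j); p_j and Q_j do not
  depend on the inputs.\<close>
type_synonym 'x step = "nat \<times> nat set \<times> ('x \<Rightarrow> matrix)"

definition valid_protocol ::
  "nat \<Rightarrow> (nat \<Rightarrow> nat) \<Rightarrow> nat \<Rightarrow> (nat \<Rightarrow> 'x set) \<Rightarrow> 'x step list \<Rightarrow> bool" where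
  "valid_protocol k n m X steps \<longleftrightarrow>
     (\<forall>(p, Q, U) \<in> set steps. p < k \<and> Q \<subseteq> {..<m} \<and>
        (\<forall>x\<in>X p. unitary_on (priv_reg n p \<union> chan_reg Q) (U x)))"

definition init_state :: vec where
  "init_state = (\<lambda>b. if b = (\<lambda>_. False) then 1 else 0)"

fun run :: "(nat \<Rightarrow> nat) \<Rightarrow> (nat \<Rightarrow> 'x) \<Rightarrow> 'x step list \<Rightarrow> vec \<Rightarrow> vec" where
  "run n x [] \<psi> = \<psi>"
| "run n x ((p, Q, U) # s) \<psi> = run n x s (apply_op (priv_reg n p \<union> chan_reg Q) (U (x p)) \<psi>)"

definition final_state :: "(nat \<Rightarrow> nat) \<Rightarrow> 'x step list \<Rightarrow> (nat \<Rightarrow> 'x) \<Rightarrow> vec" where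
  "final_state n steps x = run n x steps init_state"

text \<open>Communication complexity: sum of log dim of the channel parts = number of qubits.\<close>
definition comm_cost :: "'x step list \<Rightarrow> nat" where
  "comm_cost steps = sum_list (map (\<lambda>(p, Q, U). card Q) steps)"

definition unit_vec :: "qubit set \<Rightarrow> vec \<Rightarrow> bool" where
  "unit_vec T v \<longleftrightarrow> (\<Sum>c\<in>asg T. (cmod (v c))\<^sup>2) = 1"

end

theory Submission
  imports Defs
begin


definition dlt :: "basis \<Rightarrow> basis \<Rightarrow> complex" where
  "dlt g c = (if c = g then 1 else 0)"

lemma asg_eq_image: "asg T = (\<lambda>S q. q \<in> S) ` Pow T"
proof
  show "asg T \<subseteq> (\<lambda>S q. q \<in> S) ` Pow T"
  proof
    fix b assume "b \<in> asg T"
    then have "b = (\<lambda>q. q \<in> {q. b q})" "{q. b q} \<in> Pow T" by (auto simp: asg_def)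
    then show "b \<in> (\<lambda>S q. q \<in> S) ` Pow T" by blast
  qed
qed (auto simp: asg_def)

lemma inj_mem: "inj_on (\<lambda>S q. q \<in> S) X"
  by (auto simp: inj_on_def fun_eq_iff)

lemma finite_asg: "finite T \<Longrightarrow> finite (asg T)"
  by (simp add: asg_eq_image)

lemma card_asg: "finite T \<Longrightarrow> card (asg T) = 2 ^ card T"
  by (simp add: asg_eq_image card_image[OF inj_mem] card_Pow)

lemma restr_asg[simp]: "restr b T \<in> asg T"
  by (simp add: restr_def asg_def)

lemma overr_asg: "b \<in> asg S \<Longrightarrow> c \<in> asg T \<Longrightarrow> T \<subseteq> S \<Longrightarrow> overr b c T \<in> asg S"
  by (auto simp: overr_def asg_def)

lemma finite_priv[simp]: "finite (priv_reg n p)"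
  by (simp add: priv_reg_def)

lemma finite_chan[simp]: "finite Q \<Longrightarrow> finite (chan_reg Q)"
  by (simp add: chan_reg_def)

lemma card_chan: "card (chan_reg Q) = card Q"
  by (simp add: chan_reg_def card_image inj_on_def)

definition nrm :: "qubit set \<Rightarrow> vec \<Rightarrow> real" where
  "nrm T v = sqrt (\<Sum>c\<in>asg T. (cmod (v c))\<^sup>2)"

definition nz :: "qubit set \<Rightarrow> vec \<Rightarrow> vec" where
  "nz T v = (if nrm T v = 0 then dlt (\<lambda>_. False) else (\<lambda>c. v c / complex_of_real (nrm T v)))"

lemma nz_unit:
  assumes "finite T" shows "unit_vec T (nz T v)"
proof (cases "nrm T v = 0")
  case True
  have "(\<lambda>_. False) \<in> asg T" by (simp add: asg_def)
  then have "(\<Sum>c\<in>asg T. (cmod (dlt (\<lambda>_. False) c))\<^sup>2) = (\<Sum>c\<in>asg T. if c = (\<lambda>_. False) then 1 else 0)"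
    by (intro sum.cong) (auto simp: dlt_def)
  also have "\<dots> = 1" using \<open>(\<lambda>_. False) \<in> asg T\<close> finite_asg[OF assms] by simp
  finally show ?thesis using True by (simp add: unit_vec_def nz_def)
next
  case False
  define s where "s = (\<Sum>c\<in>asg T. (cmod (v c))\<^sup>2)"
  have s0: "s \<ge> 0" unfolding s_def by (intro sum_nonneg) auto
  have r: "nrm T v = sqrt s" by (simp add: nrm_def s_def)
  have "(\<Sum>c\<in>asg T. (cmod (v c / complex_of_real (nrm T v)))\<^sup>2) = (\<Sum>c\<in>asg T. (cmod (v c))\<^sup>2 / s)"
    using s0 by (intro sum.cong) (auto simp: r norm_divide power_divide)
  also have "\<dots> = s / s" unfolding s_def by (rule sum_divide_distrib[symmetric])
  also have "\<dots> = 1" using False r by simp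
  finally show ?thesis using False by (simp add: unit_vec_def nz_def)
qed

lemma nz_mult:
  assumes "finite T" "c \<in> asg T"
  shows "complex_of_real (nrm T v) * nz T v c = v c"
proof (cases "nrm T v = 0")
  case True
  then have "(\<Sum>c\<in>asg T. (cmod (v c))\<^sup>2) = 0" by (simp add: nrm_def)
  then have "\<forall>c\<in>asg T. (cmod (v c))\<^sup>2 = 0"
    using sum_nonneg_eq_0_iff[OF finite_asg[OF assms(1)], of "\<lambda>c. (cmod (v c))\<^sup>2"] by simp
  then have "v c = 0" using assms(2) by simp
  then show ?thesis using True by simp
next
  case False then show ?thesis by (simp add: nz_def)
qed

lemma dlt_unit:
  assumes "finite T" "g \<in> asg T" shows "unit_vec T (dlt g)"
proof -
  have "(\<Sum>c\<in>asg T. (cmod (dlt g c))\<^sup>2) = (\<Sum>c\<in>asg T. if c = g then 1 else 0)"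
    by (intro sum.cong) (auto simp: dlt_def)
  also have "\<dots> = 1" using assms finite_asg[OF assms(1)] by simp
  finally show ?thesis by (simp add: unit_vec_def)
qed


lemma priv_chan_disj: "priv_reg n p \<inter> chan_reg Q = {}"
  unfolding priv_reg_def chan_reg_def by blast

lemma priv_priv_disj: "p \<noteq> p' \<Longrightarrow> priv_reg n p \<inter> priv_reg n p' = {}"
  unfolding priv_reg_def by blast

lemma restr_overr_out: "S \<inter> T = {} \<Longrightarrow> restr (overr b c T) S = restr b S"
  by (auto simp: restr_def overr_def fun_eq_iff)

lemma restr_overr_in: "S \<subseteq> T \<Longrightarrow> restr (overr b c T) S = restr c S"
  by (auto simp: restr_def overr_def fun_eq_iff)

lemma F1_gen:
  assumes TC: "T \<inter> Ch = CQ" and "CQ \<subseteq> Ch" and gC: "\<forall>q. q \<notin> Ch \<longrightarrow> \<not> g q" and c: "c \<in> asg T"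
  shows "(restr (overr b c T) Ch = g) \<longleftrightarrow> (restr c CQ = restr g CQ \<and> restr b Ch = overr g (restr b CQ) CQ)"
proof
  assume H: "restr (overr b c T) Ch = g"
  have Hq: "(q \<in> Ch \<and> (if q \<in> T then c q else b q)) = g q" for q
    using H unfolding restr_def overr_def fun_eq_iff by simp
  have 1: "restr c CQ = restr g CQ"
  proof
    fix q show "restr c CQ q = restr g CQ q"
    proof (cases "q \<in> CQ")
      case True then have "q \<in> T" "q \<in> Ch" using TC by auto
      then show ?thesis using Hq[of q] True by (simp add: restr_def)
    qed (simp add: restr_def)
  qed
  have 2: "restr b Ch = overr g (restr b CQ) CQ"
  proof
    fix q show "restr b Ch q = overr g (restr b CQ) CQ q"
    proof (cases "q \<in> CQ")
      case True then show ?thesis using assms(2) by (auto simp: restr_def overr_def)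
    next
      case False
      show ?thesis
      proof (cases "q \<in> Ch")
        case True then have "q \<notin> T" using TC False by auto
        then show ?thesis using Hq[of q] True False by (simp add: restr_def overr_def)
      next
        case F2: False then show ?thesis using gC False by (simp add: restr_def overr_def)
      qed
    qed
  qed
  show "restr c CQ = restr g CQ \<and> restr b Ch = overr g (restr b CQ) CQ" using 1 2 by simp
next
  assume H: "restr c CQ = restr g CQ \<and> restr b Ch = overr g (restr b CQ) CQ"
  have H1: "(q \<in> CQ \<and> c q) = (q \<in> CQ \<and> g q)" for q
    using H unfolding restr_def fun_eq_iff by simp
  have H2: "(q \<in> Ch \<and> b q) = (if q \<in> CQ then q \<in> CQ \<and> b q else g q)" for q
    using H unfolding restr_def overr_def fun_eq_iff by simp
  show "restr (overr b c T) Ch = g"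
  proof
    fix q show "restr (overr b c T) Ch q = g q"
    proof (cases "q \<in> Ch")
      case True
      show ?thesis
      proof (cases "q \<in> T")
        case T1: True then have "q \<in> CQ" using TC True by auto
        then show ?thesis using H1[of q] T1 True by (simp add: restr_def overr_def)
      next
        case T2: False then have "q \<notin> CQ" using TC True by auto
        then show ?thesis using H2[of q] T2 True by (simp add: restr_def overr_def)
      qed
    next
      case False then show ?thesis using gC by (simp add: restr_def overr_def)
    qed
  qed
qed

lemma D_gen:
  assumes "CQ \<subseteq> Ch" and gC: "\<forall>q. q \<notin> Ch \<longrightarrow> \<not> g q" and c: "c' \<in> asg CQ"
  shows "(restr b Ch = overr g c' CQ) \<longleftrightarrow> (c' = restr b CQ \<and> restr b Ch = overr g (restr b CQ) CQ)"
proof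
  assume H: "restr b Ch = overr g c' CQ"
  have Hq: "(q \<in> Ch \<and> b q) = (if q \<in> CQ then c' q else g q)" for q
    using H unfolding restr_def overr_def fun_eq_iff by simp
  have "c' = restr b CQ"
  proof
    fix q show "c' q = restr b CQ q"
    proof (cases "q \<in> CQ")
      case True then have "q \<in> Ch" using assms(1) by auto
      then show ?thesis using Hq[of q] True by (simp add: restr_def)
    next
      case False then show ?thesis using c by (simp add: restr_def asg_def)
    qed
  qed
  then show "c' = restr b CQ \<and> restr b Ch = overr g (restr b CQ) CQ" using H by simp
qed simp


lemma step_i:
  fixes F :: "nat \<Rightarrow> basis \<Rightarrow> complex" and M :: matrix
  assumes pk: "p < k" and Qm: "Q \<subseteq> {..<m}" and b: "b \<in> asg (sys_reg k n m)"
    and gi: "gi \<in> asg (chan_reg {..<m})"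
    and T: "T = priv_reg n p \<union> chan_reg Q"
  shows "(\<Sum>c\<in>asg T. M (restr b T) c * ((\<Prod>p'<k. F p' (restr (overr b c T) (priv_reg n p')))
            * dlt gi (restr (overr b c T) (chan_reg {..<m})))) =
   (\<Sum>c'\<in>asg (chan_reg Q). (\<Prod>p'<k. if p' = p then
        (\<Sum>c\<in>asg T. M (\<lambda>q. restr b (priv_reg n p) q \<or> c' q) c * F p (restr c (priv_reg n p))
            * dlt (restr gi (chan_reg Q)) (restr c (chan_reg Q)))
      else F p' (restr b (priv_reg n p'))) * dlt (overr gi c' (chan_reg Q)) (restr b (chan_reg {..<m})))"
proof -
  define Ch where "Ch = chan_reg {..<m}"
  define CQ where "CQ = chan_reg Q"
  define Pp where "Pp = priv_reg n p"
  define cond where "cond = (restr b Ch = overr gi (restr b CQ) CQ)"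
  define ind :: complex where "ind = (if cond then 1 else 0)"
  define Oth where "Oth = (\<Prod>p'\<in>{..<k}-{p}. F p' (restr b (priv_reg n p')))"
  define B where "B = (\<Sum>c\<in>asg T. M (restr b T) c * F p (restr c Pp) * dlt (restr gi CQ) (restr c CQ))"
  have finCQ: "finite (asg CQ)" using Qm by (simp add: CQ_def finite_asg finite_subset)
  have CQCh: "CQ \<subseteq> Ch" using Qm by (auto simp: CQ_def Ch_def chan_reg_def)
  have PCh: "Pp \<inter> Ch = {}" by (simp add: Pp_def Ch_def priv_chan_disj)
  have TCh: "T \<inter> Ch = CQ" using CQCh PCh by (auto simp: T CQ_def Pp_def)
  have bCh: "\<forall>q. q \<notin> Ch \<longrightarrow> \<not> b q \<or> q \<notin> Ch" by auto
  have gi': "\<forall>q. q \<notin> Ch \<longrightarrow> \<not> gi q" using gi by (simp add: asg_def Ch_def)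
  have F1: "dlt gi (restr (overr b c T) Ch) = dlt (restr gi CQ) (restr c CQ) * ind" if c: "c \<in> asg T" for c
  proof -
    have "(restr (overr b c T) Ch = gi) \<longleftrightarrow> (restr c CQ = restr gi CQ \<and> cond)"
      unfolding cond_def by (rule F1_gen[OF TCh CQCh gi' that])
    then show ?thesis by (auto simp: dlt_def ind_def)
  qed
  have F3: "(\<Prod>p'<k. F p' (restr (overr b c T) (priv_reg n p'))) = F p (restr c Pp) * Oth" for c
  proof -
    have "(\<Prod>p'<k. F p' (restr (overr b c T) (priv_reg n p'))) =
        F p (restr (overr b c T) (priv_reg n p)) * (\<Prod>p'\<in>{..<k}-{p}. F p' (restr (overr b c T) (priv_reg n p')))"
      using pk by (simp add: prod.remove)
    also have "(\<Prod>p'\<in>{..<k}-{p}. F p' (restr (overr b c T) (priv_reg n p'))) = Oth"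
      unfolding Oth_def
    proof (rule prod.cong)
      fix p' assume "p' \<in> {..<k}-{p}"
      then have "priv_reg n p' \<inter> T = {}" using priv_priv_disj[of p p' n] priv_chan_disj[of n p' Q]
        by (auto simp: T)
      then show "F p' (restr (overr b c T) (priv_reg n p')) = F p' (restr b (priv_reg n p'))"
        by (simp add: restr_overr_out)
    qed simp
    also have "restr (overr b c T) (priv_reg n p) = restr c Pp"
      by (simp add: restr_overr_in T Pp_def)
    finally show ?thesis .
  qed
  have row: "restr b T = (\<lambda>q. restr b Pp q \<or> restr b CQ q)"
    by (auto simp: restr_def T Pp_def CQ_def fun_eq_iff)
  have "?thesis = ((\<Sum>c\<in>asg T. M (restr b T) c * ((\<Prod>p'<k. F p' (restr (overr b c T) (priv_reg n p')))
            * dlt gi (restr (overr b c T) Ch))) =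
   (\<Sum>c'\<in>asg CQ. (\<Prod>p'<k. if p' = p then
        (\<Sum>c\<in>asg T. M (\<lambda>q. restr b Pp q \<or> c' q) c * F p (restr c Pp)
            * dlt (restr gi CQ) (restr c CQ))
      else F p' (restr b (priv_reg n p'))) * dlt (overr gi c' CQ) (restr b Ch)))"
    by (simp only: Ch_def CQ_def Pp_def)
  moreover have "(\<Sum>c\<in>asg T. M (restr b T) c * ((\<Prod>p'<k. F p' (restr (overr b c T) (priv_reg n p')))
            * dlt gi (restr (overr b c T) Ch))) = Oth * ind * B"
  proof -
    have "(\<Sum>c\<in>asg T. M (restr b T) c * ((\<Prod>p'<k. F p' (restr (overr b c T) (priv_reg n p')))
            * dlt gi (restr (overr b c T) Ch))) = (\<Sum>c\<in>asg T. Oth * ind * (M (restr b T) c * F p (restr c Pp) * dlt (restr gi CQ) (restr c CQ)))"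
      by (intro sum.cong refl) (simp add: F1 F3)
    also have "\<dots> = Oth * ind * B" by (simp add: B_def sum_distrib_left)
    finally show ?thesis .
  qed
  moreover have "(\<Sum>c'\<in>asg CQ. (\<Prod>p'<k. if p' = p then
        (\<Sum>c\<in>asg T. M (\<lambda>q. restr b Pp q \<or> c' q) c * F p (restr c Pp)
            * dlt (restr gi CQ) (restr c CQ))
      else F p' (restr b (priv_reg n p'))) * dlt (overr gi c' CQ) (restr b Ch)) = Oth * ind * B"
  proof -
    have D: "dlt (overr gi c' CQ) (restr b Ch) = (if c' = restr b CQ then ind else 0)" if "c' \<in> asg CQ" for c'
    proof -
      have "(restr b Ch = overr gi c' CQ) \<longleftrightarrow> (c' = restr b CQ \<and> cond)"
        unfolding cond_def by (rule D_gen[OF CQCh gi' that])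
      then show ?thesis by (auto simp: dlt_def ind_def)
    qed
    have "(\<Sum>c'\<in>asg CQ. (\<Prod>p'<k. if p' = p then
        (\<Sum>c\<in>asg T. M (\<lambda>q. restr b Pp q \<or> c' q) c * F p (restr c Pp)
            * dlt (restr gi CQ) (restr c CQ))
      else F p' (restr b (priv_reg n p'))) * dlt (overr gi c' CQ) (restr b Ch)) =
      (\<Sum>c'\<in>asg CQ. if c' = restr b CQ then (\<Prod>p'<k. if p' = p then
        (\<Sum>c\<in>asg T. M (\<lambda>q. restr b Pp q \<or> c' q) c * F p (restr c Pp)
            * dlt (restr gi CQ) (restr c CQ))
      else F p' (restr b (priv_reg n p'))) * ind else 0)"
      by (intro sum.cong refl) (simp add: D)
    also have "\<dots> = (\<Prod>p'<k. if p' = p then B else F p' (restr b (priv_reg n p'))) * ind"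
      using finCQ unfolding B_def row by (simp add: sum.delta)
    also have "(\<Prod>p'<k. if p' = p then B else F p' (restr b (priv_reg n p'))) = B * Oth"
      using pk by (simp add: prod.remove Oth_def)
    finally show ?thesis by simp
  qed
  ultimately show ?thesis by simp
qed


definition repr :: "nat \<Rightarrow> (nat \<Rightarrow> nat) \<Rightarrow> nat \<Rightarrow> basis list set \<Rightarrow> (nat \<Rightarrow> basis list \<Rightarrow> 'x \<Rightarrow> vec)
   \<Rightarrow> (basis list \<Rightarrow> basis) \<Rightarrow> ((nat \<Rightarrow> 'x) \<Rightarrow> vec) \<Rightarrow> bool" where
  "repr k n m I A g \<Psi> \<longleftrightarrow> finite I \<and> (\<forall>i\<in>I. g i \<in> asg (chan_reg {..<m})) \<and>
     (\<forall>x. \<forall>b\<in>asg (sys_reg k n m). \<Psi> x b = (\<Sum>i\<in>I. (\<Prod>p<k. A p i (x p) (restr b (priv_reg n p)))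
         * dlt (g i) (restr b (chan_reg {..<m}))))"

lemma prod_if_eq: "(\<Prod>p'\<in>S. if p' = p then G p' else H p') = (\<Prod>p'\<in>S. if p' = p then G p else (H p' :: complex))"
  by (rule prod.cong) auto

lemma step_repr:
  fixes U :: "'x \<Rightarrow> matrix"
  assumes pk: "p < k" and Qm: "Q \<subseteq> {..<m}" and R: "repr k n m I A g \<Psi>"
    and T: "T = priv_reg n p \<union> chan_reg Q"
  shows "repr k n m ((\<lambda>(c', i). c' # i) ` (asg (chan_reg Q) \<times> I))
     (\<lambda>p' i' xp d. if p' = p then
        (\<Sum>c\<in>asg T. U xp (\<lambda>q. d q \<or> hd i' q) c * A p (tl i') xp (restr c (priv_reg n p))
            * dlt (restr (g (tl i')) (chan_reg Q)) (restr c (chan_reg Q)))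
      else A p' (tl i') xp d)
     (\<lambda>i'. overr (g (tl i')) (hd i') (chan_reg Q))
     (\<lambda>x. apply_op T (U (x p)) (\<Psi> x))"
proof -
  have finI: "finite I" and gI: "\<forall>i\<in>I. g i \<in> asg (chan_reg {..<m})" using R by (auto simp: repr_def)
  have finQ: "finite Q" using Qm finite_subset by blast
  have finT: "finite (asg T)" using finQ by (simp add: T finite_asg)
  have finCQ: "finite (asg (chan_reg Q))" using finQ by (simp add: finite_asg)
  have inj: "inj_on (\<lambda>(c', i). c' # i) (asg (chan_reg Q) \<times> I)" by (auto simp: inj_on_def)
  have TS: "T \<subseteq> sys_reg k n m" using pk Qm by (auto simp: T sys_reg_def chan_reg_def)
  have CQCh: "chan_reg Q \<subseteq> chan_reg {..<m}" using Qm by (auto simp: chan_reg_def)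
  show ?thesis unfolding repr_def
  proof (intro conjI ballI allI)
    show "finite ((\<lambda>(c', i). c' # i) ` (asg (chan_reg Q) \<times> I))" using finI finCQ by simp
  next
    fix i' assume "i' \<in> (\<lambda>(c', i). c' # i) ` (asg (chan_reg Q) \<times> I)"
    then obtain c' i where "i' = c' # i" "c' \<in> asg (chan_reg Q)" "i \<in> I" by auto
    then show "overr (g (tl i')) (hd i') (chan_reg Q) \<in> asg (chan_reg {..<m})"
      using gI CQCh by (auto simp: overr_asg)
  next
    fix x b assume b: "b \<in> asg (sys_reg k n m)"
    define M where "M = U (x p)"
    define F where "F i p' = A p' i (x p')" for i p'
    have "apply_op T (U (x p)) (\<Psi> x) b = (\<Sum>c\<in>asg T. M (restr b T) c * \<Psi> x (overr b c T))"
      by (simp add: apply_op_def M_def)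
    also have "\<dots> = (\<Sum>c\<in>asg T. M (restr b T) c * (\<Sum>i\<in>I. (\<Prod>p'<k. F i p' (restr (overr b c T) (priv_reg n p')))
         * dlt (g i) (restr (overr b c T) (chan_reg {..<m}))))"
    proof (rule sum.cong[OF refl])
      fix c assume "c \<in> asg T"
      then have "overr b c T \<in> asg (sys_reg k n m)" using b TS by (simp add: overr_asg)
      then show "M (restr b T) c * \<Psi> x (overr b c T) = M (restr b T) c * (\<Sum>i\<in>I. (\<Prod>p'<k. F i p' (restr (overr b c T) (priv_reg n p')))
         * dlt (g i) (restr (overr b c T) (chan_reg {..<m})))"
        using R by (simp add: repr_def F_def)
    qed
    also have "\<dots> = (\<Sum>i\<in>I. \<Sum>c\<in>asg T. M (restr b T) c * ((\<Prod>p'<k. F i p' (restr (overr b c T) (priv_reg n p')))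
         * dlt (g i) (restr (overr b c T) (chan_reg {..<m}))))"
      unfolding sum_distrib_left by (rule sum.swap)
    also have "\<dots> = (\<Sum>i\<in>I. \<Sum>c'\<in>asg (chan_reg Q). (\<Prod>p'<k. if p' = p then
        (\<Sum>c\<in>asg T. M (\<lambda>q. restr b (priv_reg n p) q \<or> c' q) c * F i p (restr c (priv_reg n p))
            * dlt (restr (g i) (chan_reg Q)) (restr c (chan_reg Q)))
      else F i p' (restr b (priv_reg n p'))) * dlt (overr (g i) c' (chan_reg Q)) (restr b (chan_reg {..<m})))"
      apply (rule sum.cong[OF refl])
      subgoal for i
        using gI by (intro step_i[where F="F i" and M=M and gi="g i", OF pk Qm b _ T]) blast
      done
    also have "\<dots> = (\<Sum>(c', i)\<in>asg (chan_reg Q) \<times> I. (\<Prod>p'<k. if p' = p then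
        (\<Sum>c\<in>asg T. M (\<lambda>q. restr b (priv_reg n p) q \<or> c' q) c * F i p (restr c (priv_reg n p))
            * dlt (restr (g i) (chan_reg Q)) (restr c (chan_reg Q)))
      else F i p' (restr b (priv_reg n p'))) * dlt (overr (g i) c' (chan_reg Q)) (restr b (chan_reg {..<m})))"
      by (rule trans[OF sum.swap sum.cartesian_product])
    also have "\<dots> = (\<Sum>i'\<in>(\<lambda>(c', i). c' # i) ` (asg (chan_reg Q) \<times> I).
       (\<Prod>p'<k. (if p' = p then
        (\<Sum>c\<in>asg T. U (x p') (\<lambda>q. restr b (priv_reg n p') q \<or> hd i' q) c * A p (tl i') (x p') (restr c (priv_reg n p))
            * dlt (restr (g (tl i')) (chan_reg Q)) (restr c (chan_reg Q)))
      else A p' (tl i') (x p') (restr b (priv_reg n p'))))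
       * dlt (overr (g (tl i')) (hd i') (chan_reg Q)) (restr b (chan_reg {..<m})))"
      unfolding sum.reindex[OF inj]
      apply (intro sum.cong refl)
      apply (clarsimp simp only: prod.case list.sel comp_def)
      apply (rule arg_cong2[where f="(*)"])
       apply (rule prod.cong[OF refl])
      subgoal for c' i p' by (cases "p' = p") (simp_all add: M_def F_def)
      apply (rule refl)
      done
    finally show "apply_op T (U (x p)) (\<Psi> x) b = (\<Sum>i'\<in>(\<lambda>(c', i). c' # i) ` (asg (chan_reg Q) \<times> I).
       (\<Prod>p'<k. (if p' = p then
        (\<Sum>c\<in>asg T. U (x p') (\<lambda>q. restr b (priv_reg n p') q \<or> hd i' q) c * A p (tl i') (x p') (restr c (priv_reg n p))
            * dlt (restr (g (tl i')) (chan_reg Q)) (restr c (chan_reg Q)))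
      else A p' (tl i') (x p') (restr b (priv_reg n p'))))
       * dlt (overr (g (tl i')) (hd i') (chan_reg Q)) (restr b (chan_reg {..<m})))" .
  qed
qed



lemma run_repr:
  assumes "\<forall>(p, Q, U)\<in>set s. p < k \<and> Q \<subseteq> {..<m}" "repr k n m I A g \<Psi>" "card I = 2 ^ L"
  shows "\<exists>I' A' g'. repr k n m I' A' g' (\<lambda>x. run n x s (\<Psi> x)) \<and> card I' = 2 ^ (L + comm_cost s)"
  using assms
proof (induction s arbitrary: I A g \<Psi> L)
  case Nil
  then show ?case by (auto simp: comm_cost_def)
next
  case (Cons st s)
  obtain p Q U where st: "st = (p, Q, U)" by (cases st) auto
  have pk: "p < k" and Qm: "Q \<subseteq> {..<m}" using Cons.prems(1) st by auto
  have finQ: "finite Q" using Qm finite_subset by blast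
  let ?T = "priv_reg n p \<union> chan_reg Q"
  let ?I = "(\<lambda>(c', i). c' # i) ` (asg (chan_reg Q) \<times> I)"
  have R: "repr k n m ?I
     (\<lambda>p' i' xp d. if p' = p then
        (\<Sum>c\<in>asg ?T. U xp (\<lambda>q. d q \<or> hd i' q) c * A p (tl i') xp (restr c (priv_reg n p))
            * dlt (restr (g (tl i')) (chan_reg Q)) (restr c (chan_reg Q)))
      else A p' (tl i') xp d)
     (\<lambda>i'. overr (g (tl i')) (hd i') (chan_reg Q))
     (\<lambda>x. apply_op ?T (U (x p)) (\<Psi> x))"
    by (rule step_repr[OF pk Qm Cons.prems(2) refl])
  have finI: "finite I" using Cons.prems(2) by (simp add: repr_def)
  have inj: "inj_on (\<lambda>(c', i). c' # i) (asg (chan_reg Q) \<times> I)" by (auto simp: inj_on_def)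
  have "card ?I = 2 ^ card Q * 2 ^ L"
    using finQ Cons.prems(3) finI
    by (simp add: card_image[OF inj] card_cartesian_product card_asg card_chan)
  then have cI: "card ?I = 2 ^ (L + card Q)" by (simp add: power_add)
  have "\<forall>(p, Q, U)\<in>set s. p < k \<and> Q \<subseteq> {..<m}" using Cons.prems(1) by auto
  from Cons.IH[OF this R cI] obtain I' A' g' where
    "repr k n m I' A' g' (\<lambda>x. run n x s (apply_op ?T (U (x p)) (\<Psi> x)))"
    "card I' = 2 ^ (L + card Q + comm_cost s)" by blast
  moreover have "comm_cost (st # s) = card Q + comm_cost s" by (simp add: comm_cost_def st)
  ultimately show ?case by (auto simp: st add.assoc)
qed

lemma init_repr:
  "repr k n m {[]} (\<lambda>p i xp. dlt (\<lambda>_. False)) (\<lambda>i. (\<lambda>_. False)) (\<lambda>x. init_state)"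
  unfolding repr_def
proof (intro conjI ballI allI)
  fix x and b assume b: "b \<in> asg (sys_reg k n m)"
  have iff: "(b = (\<lambda>_. False)) \<longleftrightarrow> (\<forall>p<k. restr b (priv_reg n p) = (\<lambda>_. False)) \<and> restr b (chan_reg {..<m}) = (\<lambda>_. False)"
  proof
    assume H: "(\<forall>p<k. restr b (priv_reg n p) = (\<lambda>_. False)) \<and> restr b (chan_reg {..<m}) = (\<lambda>_. False)"
    show "b = (\<lambda>_. False)"
    proof
      fix q show "b q = False"
      proof (rule ccontr)
        assume "b q \<noteq> False"
        then have bq: "b q" by simp
        then have "q \<in> sys_reg k n m" using b by (auto simp: asg_def)
        then consider p where "p < k" "q \<in> priv_reg n p" | "q \<in> chan_reg {..<m}" by (auto simp: sys_reg_def)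
        then show False
        proof cases
          case 1 then show False using H bq by (metis restr_def)
        next
          case 2 then show False using H bq by (metis restr_def)
        qed
      qed
    qed
  qed (auto simp: restr_def)
  show "init_state b = (\<Sum>i\<in>{[]}. (\<Prod>p<k. dlt (\<lambda>_. False) (restr b (priv_reg n p))) * dlt (\<lambda>_. False) (restr b (chan_reg {..<m})))"
  proof (cases "b = (\<lambda>_. False)")
    case True
    then show ?thesis using iff by (simp add: init_state_def dlt_def)
  next
    case False
    then consider p where "p < k" "restr b (priv_reg n p) \<noteq> (\<lambda>_. False)" | "restr b (chan_reg {..<m}) \<noteq> (\<lambda>_. False)"
      using iff by blast
    then show ?thesis
    proof cases
      case 1
      then have "(\<Prod>p<k. dlt (\<lambda>_. False) (restr b (priv_reg n p))) = 0"
        by (subst prod_zero_iff) (auto simp: dlt_def)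
      then show ?thesis using False by (simp add: init_state_def)
    next
      case 2 then show ?thesis using False by (simp add: init_state_def dlt_def)
    qed
  qed
qed (auto simp: asg_def)



theorem mainTheorem3:
  fixes k m :: nat and n :: "nat \<Rightarrow> nat" and X :: "nat \<Rightarrow> 'x set"
    and steps :: "'x step list"
  assumes "valid_protocol k n m X steps"
  shows "\<exists>(a :: nat \<Rightarrow> bool list \<Rightarrow> 'x \<Rightarrow> complex)
           (A :: nat \<Rightarrow> bool list \<Rightarrow> 'x \<Rightarrow> vec) (f :: bool list \<Rightarrow> vec).
     (\<forall>p<k. \<forall>i. length i = comm_cost steps \<longrightarrow>
         (\<forall>xp\<in>X p. unit_vec (priv_reg n p) (A p i xp))) \<and>
     (\<forall>i. length i = comm_cost steps \<longrightarrow> unit_vec (chan_reg {..<m}) (f i)) \<and>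
     (\<forall>x. (\<forall>p<k. x p \<in> X p) \<longrightarrow>
        (\<forall>b\<in>asg (sys_reg k n m).
           final_state n steps x b =
           (\<Sum>i\<in>{i :: bool list. length i = comm_cost steps}.
              (\<Prod>p<k. a p i (x p) * A p i (x p) (restr b (priv_reg n p)))
              * f i (restr b (chan_reg {..<m})))))"
proof -
  let ?C = "comm_cost steps"
  have v: "\<forall>(p, Q, U)\<in>set steps. p < k \<and> Q \<subseteq> {..<m}"
    using assms unfolding valid_protocol_def by fast
  obtain I B g where R: "repr k n m I B g (\<lambda>x. run n x steps init_state)" and cI: "card I = 2 ^ (0 + ?C)"
    using run_repr[OF v init_repr[of k n m], of 0] by auto
  have finI: "finite I" and gI: "\<forall>i\<in>I. g i \<in> asg (chan_reg {..<m})" using R by (auto simp: repr_def)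
  let ?L = "{i :: bool list. length i = ?C}"
  have LL: "?L = {xs. set xs \<subseteq> (UNIV :: bool set) \<and> length xs = ?C}" by simp
  have finL: "finite ?L" unfolding LL by (rule finite_lists_length_eq) simp
  have cL: "card ?L = 2 ^ ?C" using card_lists_length_eq[of "UNIV :: bool set" ?C] by simp
  obtain h where h: "bij_betw h ?L I" using finite_same_card_bij[OF finL finI] cL cI by auto
  have hI: "h i \<in> I" if "length i = ?C" for i using h that by (auto dest: bij_betwE)
  show ?thesis
  proof (rule exI[of _ "\<lambda>p i xp. complex_of_real (nrm (priv_reg n p) (B p (h i) xp))"],
      rule exI[of _ "\<lambda>p i xp. nz (priv_reg n p) (B p (h i) xp)"],
      rule exI[of _ "\<lambda>i. dlt (g (h i))"], intro conjI allI impI ballI)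
    fix p and i :: "bool list" and xp assume "p < k" "length i = ?C"
    show "unit_vec (priv_reg n p) (nz (priv_reg n p) (B p (h i) xp))" by (rule nz_unit) simp
  next
    fix i :: "bool list" assume "length i = ?C"
    then show "unit_vec (chan_reg {..<m}) (dlt (g (h i)))"
      using gI hI by (intro dlt_unit) auto
  next
    fix x :: "nat \<Rightarrow> 'x" and b assume b: "b \<in> asg (sys_reg k n m)"
    have "final_state n steps x b = (\<Sum>j\<in>I. (\<Prod>p<k. B p j (x p) (restr b (priv_reg n p)))
         * dlt (g j) (restr b (chan_reg {..<m})))"
      using R b by (simp add: repr_def final_state_def)
    also have "\<dots> = (\<Sum>i\<in>?L. (\<Prod>p<k. B p (h i) (x p) (restr b (priv_reg n p)))
         * dlt (g (h i)) (restr b (chan_reg {..<m})))"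
      by (rule sum.reindex_bij_betw[OF h, symmetric])
    also have "\<dots> = (\<Sum>i\<in>?L. (\<Prod>p<k. complex_of_real (nrm (priv_reg n p) (B p (h i) (x p)))
           * nz (priv_reg n p) (B p (h i) (x p)) (restr b (priv_reg n p)))
         * dlt (g (h i)) (restr b (chan_reg {..<m})))"
      by (simp add: nz_mult)
    finally show "final_state n steps x b = (\<Sum>i\<in>?L. (\<Prod>p<k. (\<lambda>p i xp. complex_of_real (nrm (priv_reg n p) (B p (h i) xp))) p i (x p)
           * (\<lambda>p i xp. nz (priv_reg n p) (B p (h i) xp)) p i (x p) (restr b (priv_reg n p)))
         * (\<lambda>i. dlt (g (h i))) i (restr b (chan_reg {..<m})))" by simp
  qed
qed

end
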